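(* Let $d\ge1$, let $\Lambda\subset\mathbb{R}^{2d}$ be a lattice, let $g\in L^2(\mathbb{R}^d)$ be such that $(g,\Lambda)$ induces a frame with frame constants $A,B>0$, and let $\Omega\subset\mathbb{R}^{2d}$ be compact. Then $$\Vert\rho_\Omega-\chi_\Omega\Vert_{\ell^1(\Lambda)}\le\frac{2}{\Vert g\Vert_{L^2}^2}\Big(\#(\Omega\cap\Lambda)\Vert g\Vert_{L^2}^2-\sum_{k=1}^{A_\Omega}\lambda_k^\Omega\Big)+\frac{B}{\Vert g\Vert_{L^2}^2}.$$
   Context: For $z=(x,\omega)\in\mathbb{R}^{2d}$ the time-frequency shift $\pi(z)$ acts on $L^2(\mathbb{R}^d)$ by $\pi(x,\omega)f(t)=e^{2\pi i\omega\cdot t}f(t-x)$, and $V_gf(z)=\langle f,\pi(z)g\rangle$. A lattice is $\Lambda=M\mathbb{Z}^{2d}$ with $M$ an invertible real $2d\times2d$ matrix. $(g,\Lambda)$ induces a frame with frame constants $A,B>0$ if $A\Vert f\Vert_{L^2}^2\le\sum_{\lambda\in\Lambda}|\langle f,\pi(\lambda)g\rangle|^2\le B\Vert f\Vert_{L^2}^2$ for all $f\in L^2(\mathbb{R}^d)$. For compact $\Omega$ the Gabor multiplier is $G^g_{\Omega,\Lambda}f=\sum_{\lambda\in\Lambda}\chi_\Omega(\lambda)V_gf(\lambda)\pi(\lambda)g$; it is a finite-rank positive self-adjoint operator with eigendecomposition $G^g_{\Omega,\Lambda}=\sum_{k=1}^\infty\lambda_k^\Omega\langle\cdot,h_k^\Omega\rangle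 h_k^\Omega$, where $(h_k^\Omega)_{k\ge1}$ is an orthonormal basis of $L^2(\mathbb{R}^d)$ and $\lambda_1^\Omega\ge\lambda_2^\Omega\ge\dots\ge0$. The accumulated spectrogram is $\rho_\Omega(\lambda)=\frac{1}{\Vert g\Vert_{L^2}^2}\sum_{k=1}^{A_\Omega}|V_gh_k^\Omega(\lambda)|^2$ for $\lambda\in\Lambda$, with $A_\Omega=\left\lceil\frac{\#(\Omega\cap\Lambda)\Vert g\Vert_{L^2}^2}{B}\right\rceil$. $\#$ denotes cardinality and $\Vert c\Vert_{\ell^1(\Lambda)}=\sum_{\lambda\in\Lambda}|c(\lambda)|$. *)

theory Defs
  imports "HOL-Analysis.Analysis"
begin

text \<open>Functions on R^d are modelled as complex-valued functions on real^'d
  (the finite type 'd has cardinality d, automatically d >= 1). Phase space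
  R^{2d} is (real^'d) \<times> (real^'d), with z = (x, omega). L^2 membership is
  Lebesgue measurability plus square integrability; elements of L^2 are
  compared up to the L^2 (semi)norm.\<close>

definition in_L2 :: "(real^'d \<Rightarrow> complex) \<Rightarrow> bool" where
  "in_L2 f \<longleftrightarrow> f \<in> borel_measurable lborel \<and> integrable lborel (\<lambda>t. (cmod (f t))\<^sup>2)"

definition L2_inner :: "(real^'d \<Rightarrow> complex) \<Rightarrow> (real^'d \<Rightarrow> complex) \<Rightarrow> complex" where
  "L2_inner f h = (LINT t|lborel. f t * cnj (h t))"

definition L2_norm :: "(real^'d \<Rightarrow> complex) \<Rightarrow> real" where
  "L2_norm f = sqrt (LINT t|lborel. (cmod (f t))\<^sup>2)"

definition tf_shift :: "(real^'d) \<times> (real^'d) \<Rightarrow> (real^'d \<Rightarrow> complex) \<Rightarrow> (real^'d \<Rightarrow> complex)" where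
  "tf_shift z f = (\<lambda>t. cis (2 * pi * (snd z \<bullet> t)) * f (t - fst z))"

definition STFT :: "(real^'d \<Rightarrow> complex) \<Rightarrow> (real^'d \<Rightarrow> complex) \<Rightarrow> (real^'d) \<times> (real^'d) \<Rightarrow> complex" where
  "STFT g f z = L2_inner f (tf_shift z g)"

definition int_points :: "((real^'d) \<times> (real^'d)) set" where
  "int_points = {(a, b). (\<forall>i. a $ i \<in> \<int>) \<and> (\<forall>i. b $ i \<in> \<int>)}"

definition is_lattice :: "((real^'d) \<times> (real^'d)) set \<Rightarrow> bool" where
  "is_lattice L \<longleftrightarrow> (\<exists>M :: (real^'d) \<times> (real^'d) \<Rightarrow> (real^'d) \<times> (real^'d). linear M \<and> bij M \<and> L = M ` int_points)"

definition gabor_frame :: "(real^'d \<Rightarrow> complex) \<Rightarrow> ((real^'d) \<times> (real^'d)) set \<Rightarrow> real \<Rightarrow> real \<Rightarrow> bool" where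
  "gabor_frame g L A B \<longleftrightarrow> A > 0 \<and> B > 0 \<and>
     (\<forall>f. in_L2 f \<longrightarrow>
        (\<lambda>l. (cmod (STFT g f l))\<^sup>2) summable_on L \<and>
        A * (L2_norm f)\<^sup>2 \<le> (\<Sum>\<^sub>\<infinity>l\<in>L. (cmod (STFT g f l))\<^sup>2) \<and>
        (\<Sum>\<^sub>\<infinity>l\<in>L. (cmod (STFT g f l))\<^sup>2) \<le> B * (L2_norm f)\<^sup>2)"

text \<open>Gabor multiplier: sum over lambda in Lambda of chi_Omega(lambda) V_g f(lambda) pi(lambda) g;
  only the (finitely many) lattice points in Omega contribute.\<close>
definition gabor_mult :: "(real^'d \<Rightarrow> complex) \<Rightarrow> ((real^'d) \<times> (real^'d)) set \<Rightarrow> ((real^'d) \<times> (real^'d)) set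
     \<Rightarrow> (real^'d \<Rightarrow> complex) \<Rightarrow> (real^'d \<Rightarrow> complex)" where
  "gabor_mult g Om L f = (\<lambda>t. \<Sum>l\<in>Om \<inter> L. STFT g f l * tf_shift l g t)"

text \<open>Orthonormal basis of L^2 (indexed by nat, k = 0 corresponds to k = 1 in the paper).\<close>
definition L2_onb :: "(nat \<Rightarrow> real^'d \<Rightarrow> complex) \<Rightarrow> bool" where
  "L2_onb h \<longleftrightarrow> (\<forall>k. in_L2 (h k)) \<and>
     (\<forall>j k. L2_inner (h j) (h k) = (if j = k then 1 else 0)) \<and>
     (\<forall>f. in_L2 f \<longrightarrow>
        (\<lambda>n. L2_norm (\<lambda>t. f t - (\<Sum>k<n. L2_inner f (h k) * h k t))) \<longlonglongrightarrow> 0)"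

definition eigendecomp :: "((real^'d \<Rightarrow> complex) \<Rightarrow> (real^'d \<Rightarrow> complex)) \<Rightarrow> (nat \<Rightarrow> real)
     \<Rightarrow> (nat \<Rightarrow> real^'d \<Rightarrow> complex) \<Rightarrow> bool" where
  "eigendecomp G lam h \<longleftrightarrow> L2_onb h \<and> (\<forall>k. lam k \<ge> lam (Suc k)) \<and> (\<forall>k. lam k \<ge> 0) \<and>
     (\<forall>f. in_L2 f \<longrightarrow>
        (\<lambda>n. L2_norm (\<lambda>t. G f t - (\<Sum>k<n. complex_of_real (lam k) * L2_inner f (h k) * h k t))) \<longlonglongrightarrow> 0)"

definition A_Om :: "(real^'d \<Rightarrow> complex) \<Rightarrow> ((real^'d) \<times> (real^'d)) set \<Rightarrow> ((real^'d) \<times> (real^'d)) set \<Rightarrow> real \<Rightarrow> nat" where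
  "A_Om g Om L B = nat \<lceil>real (card (Om \<inter> L)) * (L2_norm g)\<^sup>2 / B\<rceil>"

definition acc_spec :: "(real^'d \<Rightarrow> complex) \<Rightarrow> (nat \<Rightarrow> real^'d \<Rightarrow> complex) \<Rightarrow> nat
     \<Rightarrow> (real^'d) \<times> (real^'d) \<Rightarrow> real" where
  "acc_spec g h N l = (1 / (L2_norm g)\<^sup>2) * (\<Sum>k<N. (cmod (STFT g (h k) l))\<^sup>2)"

end

theory Submission
  imports Defs
begin

lemma cnj_meas[measurable]: "cnj \<in> borel_measurable borel"
  by (intro borel_measurable_continuous_onI continuous_intros)

lemma L2_meas: "in_L2 f \<Longrightarrow> f \<in> borel_measurable lborel"
  by (simp add: in_L2_def)

lemma L2_int: "in_L2 f \<Longrightarrow> integrable lborel (\<lambda>t. (cmod (f t))\<^sup>2)"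
  by (simp add: in_L2_def)

lemma L2_prod_int:
  assumes "in_L2 f" "in_L2 h"
  shows "integrable lborel (\<lambda>t. f t * cnj (h t))"
proof (rule Bochner_Integration.integrable_bound)
  show "integrable lborel (\<lambda>t. (cmod (f t))\<^sup>2 + (cmod (h t))\<^sup>2)"
    using assms by (intro Bochner_Integration.integrable_add L2_int)
  have [measurable]: "f \<in> borel_measurable lborel" "h \<in> borel_measurable lborel"
    using assms L2_meas by auto
  show "(\<lambda>t. f t * cnj (h t)) \<in> borel_measurable lborel"
    by measurable
  show "AE x in lborel. norm (f x * cnj (h x)) \<le> norm ((cmod (f x))\<^sup>2 + (cmod (h x))\<^sup>2)"
  proof (intro AE_I2)
    fix x
    have "cmod (f x) * cmod (h x) \<le> (cmod (f x))\<^sup>2 + (cmod (h x))\<^sup>2"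
      by (smt (verit, best) norm_ge_zero power2_eq_square mult_mono sum_squares_bound)
    then show "norm (f x * cnj (h x)) \<le> norm ((cmod (f x))\<^sup>2 + (cmod (h x))\<^sup>2)"
      by (simp add: norm_mult)
  qed
qed

lemma L2_add:
  assumes "in_L2 f" "in_L2 h"
  shows "in_L2 (\<lambda>t. f t + h t)"
  unfolding in_L2_def
proof
  have [measurable]: "f \<in> borel_measurable lborel" "h \<in> borel_measurable lborel"
    using assms L2_meas by auto
  show "(\<lambda>t. f t + h t) \<in> borel_measurable lborel" by measurable
  show "integrable lborel (\<lambda>t. (cmod (f t + h t))\<^sup>2)"
  proof (rule Bochner_Integration.integrable_bound)
    show "integrable lborel (\<lambda>t. 2 * (cmod (f t))\<^sup>2 + 2 * (cmod (h t))\<^sup>2)"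
      using assms by (intro Bochner_Integration.integrable_add Bochner_Integration.integrable_mult_right L2_int)
    show "(\<lambda>t. (cmod (f t + h t))\<^sup>2) \<in> borel_measurable lborel"
      by measurable
    show "AE x in lborel. norm ((cmod (f x + h x))\<^sup>2) \<le> norm (2 * (cmod (f x))\<^sup>2 + 2 * (cmod (h x))\<^sup>2)"
    proof (intro AE_I2)
      fix x
      have a: "cmod (f x + h x) \<le> cmod (f x) + cmod (h x)" by (rule norm_triangle_ineq)
      have "(cmod (f x + h x))\<^sup>2 \<le> (cmod (f x) + cmod (h x))\<^sup>2"
        using a by (simp add: power_mono)
      also have "\<dots> \<le> 2 * (cmod (f x))\<^sup>2 + 2 * (cmod (h x))\<^sup>2"
        by (smt (verit) power2_sum sum_squares_bound norm_ge_zero mult_nonneg_nonneg)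
      finally show "norm ((cmod (f x + h x))\<^sup>2) \<le> norm (2 * (cmod (f x))\<^sup>2 + 2 * (cmod (h x))\<^sup>2)"
        by simp
    qed
  qed
qed

lemma L2_scale:
  assumes "in_L2 f"
  shows "in_L2 (\<lambda>t. c * f t)"
  unfolding in_L2_def
proof
  have [measurable]: "f \<in> borel_measurable lborel"
    using assms L2_meas by auto
  show "(\<lambda>t. c * f t) \<in> borel_measurable lborel" by measurable
  have "integrable lborel (\<lambda>t. (cmod c)\<^sup>2 * (cmod (f t))\<^sup>2)"
    using assms by (intro Bochner_Integration.integrable_mult_right L2_int)
  then show "integrable lborel (\<lambda>t. (cmod (c * f t))\<^sup>2)"
    by (simp add: norm_mult power_mult_distrib)
qed

lemma L2_zero: "in_L2 (\<lambda>t. 0)"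
  by (simp add: in_L2_def)

lemma L2_sum:
  assumes "\<And>i. i \<in> I \<Longrightarrow> in_L2 (f i)"
  shows "in_L2 (\<lambda>t. \<Sum>i\<in>I. f i t)"
  using assms
proof (induction I rule: infinite_finite_induct)
  case (infinite A) then show ?case by (simp add: L2_zero)
next
  case empty then show ?case by (simp add: L2_zero)
next
  case (insert x F)
  then show ?case by (simp add: L2_add)
qed

lemma L2_diff:
  assumes "in_L2 f" "in_L2 h"
  shows "in_L2 (\<lambda>t. f t - h t)"
  using L2_add[OF assms(1) L2_scale[OF assms(2), of "-1"]] by simp

lemma inner_cnj: "L2_inner h f = cnj (L2_inner f h)"
  unfolding L2_inner_def Bochner_Integration.integral_cnj[symmetric] by (simp add: mult.commute)

lemma inner_add_left:
  assumes "in_L2 f1" "in_L2 f2" "in_L2 h"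
  shows "L2_inner (\<lambda>t. f1 t + f2 t) h = L2_inner f1 h + L2_inner f2 h"
  unfolding L2_inner_def distrib_right
  by (rule Bochner_Integration.integral_add; intro L2_prod_int assms)

lemma inner_scale_left:
  shows "L2_inner (\<lambda>t. c * f t) h = c * L2_inner f h"
  unfolding L2_inner_def
  by (simp add: mult.assoc)

lemma inner_sum_left:
  assumes "\<And>i. i \<in> I \<Longrightarrow> in_L2 (f i)" "in_L2 h"
  shows "L2_inner (\<lambda>t. \<Sum>i\<in>I. f i t) h = (\<Sum>i\<in>I. L2_inner (f i) h)"
  unfolding L2_inner_def sum_distrib_right
  by (rule Bochner_Integration.integral_sum; intro L2_prod_int assms)

lemma inner_self: "L2_inner f f = complex_of_real ((L2_norm f)\<^sup>2)"
  unfolding L2_inner_def L2_norm_def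
  by (simp add: complex_norm_square[symmetric] del: integral_complex_of_real add: integral_complex_of_real[symmetric])

lemma inner_add_right:
  assumes "in_L2 f1" "in_L2 f2" "in_L2 h"
  shows "L2_inner h (\<lambda>t. f1 t + f2 t) = L2_inner h f1 + L2_inner h f2"
  using inner_add_left[OF assms] inner_cnj
  by (metis complex_cnj_add)

lemma inner_diff_left:
  assumes "in_L2 f1" "in_L2 f2" "in_L2 h"
  shows "L2_inner (\<lambda>t. f1 t - f2 t) h = L2_inner f1 h - L2_inner f2 h"
proof -
  have "L2_inner (\<lambda>t. f1 t - f2 t) h = L2_inner (\<lambda>t. f1 t + (-1) * f2 t) h" by simp
  also have "\<dots> = L2_inner f1 h + L2_inner (\<lambda>t. (-1) * f2 t) h"
    by (rule inner_add_left) (use assms L2_scale[of f2 "-1"] in auto)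
  also have "\<dots> = L2_inner f1 h - L2_inner f2 h"
    by (simp only: inner_scale_left) simp
  finally show ?thesis .
qed

lemma bessel:
  fixes h :: "nat \<Rightarrow> real^'d \<Rightarrow> complex"
  assumes f: "in_L2 f" and hL: "\<And>k. in_L2 (h k)"
    and orth: "\<And>j k. L2_inner (h j) (h k) = (if j = k then 1 else 0)"
  shows "(\<Sum>k<N. (cmod (L2_inner f (h k)))\<^sup>2) \<le> (L2_norm f)\<^sup>2"
proof -
  define c where "c k = L2_inner f (h k)" for k
  define s where "s t = (\<Sum>k<N. c k * h k t)" for t
  define d where "d t = f t - s t" for t
  have sL: "in_L2 s" unfolding s_def by (intro L2_sum L2_scale hL)
  have dL: "in_L2 d" unfolding d_def by (intro L2_diff f sL)
  have sh: "L2_inner s (h j) = c j" if "j < N" for j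
  proof -
    have "L2_inner s (h j) = (\<Sum>k<N. L2_inner (\<lambda>t. c k * h k t) (h j))"
      unfolding s_def by (rule inner_sum_left) (auto intro: L2_scale hL)
    also have "\<dots> = (\<Sum>k<N. c k * (if k = j then 1 else 0))"
      by (simp only: inner_scale_left orth)
    also have "\<dots> = (\<Sum>k<N. if k = j then c k else 0)" by (intro sum.cong) auto
    also have "\<dots> = c j" using that by simp
    finally show ?thesis .
  qed
  have dh: "L2_inner d (h j) = 0" if "j < N" for j
    unfolding d_def using sh[OF that] by (simp add: inner_diff_left f sL hL c_def)
  have sd: "L2_inner s d = 0"
  proof -
    have "L2_inner s d = (\<Sum>k<N. L2_inner (\<lambda>t. c k * h k t) d)"
      unfolding s_def by (rule inner_sum_left) (auto intro: L2_scale hL dL)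
    also have "\<dots> = (\<Sum>k<N. c k * cnj (L2_inner d (h k)))"
      by (simp only: inner_scale_left inner_cnj[of "h _" d])
    also have "\<dots> = 0" using dh by simp
    finally show ?thesis .
  qed
  have ss: "L2_inner s s = (\<Sum>k<N. complex_of_real ((cmod (c k))\<^sup>2))"
  proof -
    have seq: "s = (\<lambda>t. \<Sum>k<N. c k * h k t)" using s_def by auto
    have "L2_inner s s = (\<Sum>k<N. L2_inner (\<lambda>t. c k * h k t) s)"
      apply (subst (1) seq) by (rule inner_sum_left) (auto intro: L2_scale hL sL)
    also have "\<dots> = (\<Sum>k<N. c k * cnj (L2_inner s (h k)))"
      by (simp only: inner_scale_left inner_cnj[of "h _" s])
    also have "\<dots> = (\<Sum>k<N. complex_of_real ((cmod (c k))\<^sup>2))"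
      using sh by (intro sum.cong) (auto simp: complex_norm_square[symmetric])
    finally show ?thesis .
  qed
  have fds: "f = (\<lambda>t. d t + s t)" unfolding d_def by auto
  have "L2_inner f f = L2_inner (\<lambda>t. d t + s t) (\<lambda>t. d t + s t)" using fds by simp
  also have "\<dots> = L2_inner d (\<lambda>t. d t + s t) + L2_inner s (\<lambda>t. d t + s t)"
    by (rule inner_add_left) (auto intro: dL sL L2_add)
  also have "\<dots> = L2_inner d d + L2_inner d s + L2_inner s d + L2_inner s s"
    by (simp add: inner_add_right dL sL)
  also have "L2_inner d s = 0" using sd inner_cnj[of d s] by simp
  finally have "L2_inner f f = L2_inner d d + L2_inner s s" using sd by simp
  then have "complex_of_real ((L2_norm f)\<^sup>2) = complex_of_real ((L2_norm d)\<^sup>2 + (\<Sum>k<N. (cmod (c k))\<^sup>2))"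
    by (simp only: ss inner_self[of f] inner_self[of d]) simp
  then have "(L2_norm f)\<^sup>2 = (L2_norm d)\<^sup>2 + (\<Sum>k<N. (cmod (c k))\<^sup>2)"
    using of_real_eq_iff by blast
  then show ?thesis unfolding c_def by simp
qed

lemma shift_meas:
  assumes "g \<in> borel_measurable lborel"
  shows "(\<lambda>t. g (t - a)) \<in> borel_measurable lborel"
proof -
  have [measurable]: "g \<in> borel_measurable borel" using assms by simp
  show ?thesis by measurable
qed

lemma shift_integral:
  fixes f :: "real^'d \<Rightarrow> real"
  assumes "f \<in> borel_measurable lborel"
  shows "(LINT t|lborel. f (t - a)) = (LINT t|lborel. f t)"
    and "integrable lborel (\<lambda>t. f (t - a)) \<longleftrightarrow> integrable lborel f"
proof -
  have m: "f \<in> borel_measurable borel" using assms by simp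
  have T: "(+) (-a) \<in> measurable lborel borel" by simp
  have "(LINT t|lborel. f t) = integral\<^sup>L (distr lborel borel ((+) (-a))) f"
    by (simp add: lborel_distr_plus)
  also have "\<dots> = (LINT t|lborel. f (-a + t))"
    by (rule integral_distr[OF T m])
  finally show "(LINT t|lborel. f (t - a)) = (LINT t|lborel. f t)" by simp
  have "integrable lborel f \<longleftrightarrow> integrable (distr lborel borel ((+) (-a))) f"
    by (simp add: lborel_distr_plus)
  also have "\<dots> \<longleftrightarrow> integrable lborel (\<lambda>t. f (-a + t))"
    by (rule integrable_distr_eq[OF T m])
  finally show "integrable lborel (\<lambda>t. f (t - a)) \<longleftrightarrow> integrable lborel f" by simp
qed

lemma cmod_shift: "cmod (tf_shift z g t) = cmod (g (t - fst z))"
  unfolding tf_shift_def by (simp add: norm_mult)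

lemma shift_L2:
  assumes "in_L2 g"
  shows "in_L2 (tf_shift z g)" "L2_norm (tf_shift z g) = L2_norm g"
proof -
  have [measurable]: "g \<in> borel_measurable borel" using assms L2_meas by simp
  have m: "(\<lambda>t. (cmod (g t))\<^sup>2) \<in> borel_measurable lborel" by measurable
  show "in_L2 (tf_shift z g)"
    unfolding in_L2_def cmod_shift
  proof
    have [measurable]: "(\<lambda>t. cis (2 * pi * (snd z \<bullet> t))) \<in> borel_measurable borel"
      by (intro borel_measurable_continuous_onI continuous_intros)
    have [measurable]: "(\<lambda>t. g (t - fst z)) \<in> borel_measurable lborel"
      by (rule shift_meas) simp
    show "tf_shift z g \<in> borel_measurable lborel"
      unfolding tf_shift_def by measurable
    show "integrable lborel (\<lambda>t. (cmod (g (t - fst z)))\<^sup>2)"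
      using shift_integral(2)[OF m, of "fst z"] L2_int[OF assms] by simp
  qed
  show "L2_norm (tf_shift z g) = L2_norm g"
    unfolding L2_norm_def cmod_shift using shift_integral(1)[OF m, of "fst z"] by simp
qed

lemma vec_int_sep:
  fixes a b :: "real^'d"
  assumes "\<forall>i. a $ i \<in> \<int>" "\<forall>i. b $ i \<in> \<int>" "a \<noteq> b"
  shows "1 \<le> dist a b"
proof -
  obtain i where i: "a $ i \<noteq> b $ i" using assms(3) by (auto simp: vec_eq_iff)
  have "a $ i - b $ i \<in> \<int>" using assms by auto
  then have "1 \<le> \<bar>a $ i - b $ i\<bar>" using i by (intro Ints_nonzero_abs_ge1) auto
  also have "\<dots> = \<bar>(a - b) $ i\<bar>" by simp
  also have "\<dots> \<le> norm (a - b)" by (rule component_le_norm_cart)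
  finally show ?thesis by (simp add: dist_norm)
qed

lemma int_points_sep:
  assumes "p \<in> int_points" "q \<in> int_points" "p \<noteq> q"
  shows "1 \<le> dist p q"
proof -
  obtain a b a' b' where p: "p = (a, b)" and q: "q = (a', b')" by (cases p, cases q) auto
  from assms p q have ia: "\<forall>i. a $ i \<in> \<int>" "\<forall>i. b $ i \<in> \<int>" "\<forall>i. a' $ i \<in> \<int>" "\<forall>i. b' $ i \<in> \<int>"
    by (auto simp: int_points_def)
  have d: "dist p q = sqrt ((dist a a')\<^sup>2 + (dist b b')\<^sup>2)" by (simp add: p q dist_Pair_Pair)
  show ?thesis
  proof (cases "a = a'")
    case True
    then have "b \<noteq> b'" using assms p q by auto
    then have "1 \<le> dist b b'" using ia by (intro vec_int_sep) auto
    also have "\<dots> \<le> dist p q" unfolding d by (rule real_sqrt_sum_squares_ge2)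
    finally show ?thesis .
  next
    case False
    then have "1 \<le> dist a a'" using ia by (intro vec_int_sep) auto
    also have "\<dots> \<le> dist p q" unfolding d by (rule real_sqrt_sum_squares_ge1)
    finally show ?thesis .
  qed
qed

lemma int_points_no_limpt: "\<not> z islimpt int_points"
proof
  assume "z islimpt int_points"
  then have ap: "\<And>e. e > 0 \<Longrightarrow> \<exists>x'\<in>int_points. x' \<noteq> z \<and> dist x' z < e"
    by (simp add: islimpt_approachable)
  obtain p where p: "p \<in> int_points" "p \<noteq> z" "dist p z < 1/2" using ap[of "1/2"] by auto
  have "dist p z > 0" using p by simp
  then obtain q where q: "q \<in> int_points" "q \<noteq> z" "dist q z < dist p z" using ap by blast
  have "p \<noteq> q" using q by auto
  then have "1 \<le> dist p q" using p q int_points_sep by blast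
  moreover have "dist p q \<le> dist p z + dist q z" by (metis dist_commute dist_triangle)
  ultimately show False using p q by linarith
qed

lemma lattice_finite:
  fixes L Om :: "((real^'d) \<times> (real^'d)) set"
  assumes "is_lattice L" "compact Om"
  shows "finite (Om \<inter> L)"
proof -
  obtain M :: "(real^'d) \<times> (real^'d) \<Rightarrow> (real^'d) \<times> (real^'d)"
    where M: "linear M" "bij M" "L = M ` int_points"
    using assms(1) unfolding is_lattice_def by blast
  obtain G :: "(real^'d) \<times> (real^'d) \<Rightarrow> (real^'d) \<times> (real^'d)"
    where G: "linear G" "G \<circ> M = id"
    using linear_injective_left_inverse[OF M(1) bij_is_inj[OF M(2)]] by blast
  have "compact (G ` Om)"
    using G(1) assms(2) by (intro compact_continuous_image linear_continuous_on) (simp add: linear_conv_bounded_linear)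
  then have fin: "finite (G ` Om \<inter> int_points)"
    by (rule finite_not_islimpt_in_compact) (rule int_points_no_limpt)
  have "Om \<inter> L \<subseteq> M ` (G ` Om \<inter> int_points)"
  proof
    fix y assume y: "y \<in> Om \<inter> L"
    then obtain p where p: "p \<in> int_points" "y = M p" using M(3) by auto
    have "G y = p" using p G(2) by (metis comp_apply id_apply)
    then have "p \<in> G ` Om \<inter> int_points" using y p by (metis IntD1 IntI image_eqI)
    then show "y \<in> M ` (G ` Om \<inter> int_points)" using p by blast
  qed
  then show ?thesis using fin by (meson finite_imageI finite_subset)
qed

lemma infsum_fsum:
  fixes f :: "'i \<Rightarrow> 'a \<Rightarrow> real"
  assumes "finite I" "\<And>i. i \<in> I \<Longrightarrow> f i summable_on A"
  shows "(\<lambda>x. \<Sum>i\<in>I. f i x) summable_on A \<and> infsum (\<lambda>x. \<Sum>i\<in>I. f i x) A = (\<Sum>i\<in>I. infsum (f i) A)"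
  using assms
proof (induction I rule: finite_induct)
  case empty then show ?case by simp
next
  case (insert j F)
  then have IH: "(\<lambda>x. \<Sum>i\<in>F. f i x) summable_on A"
     "infsum (\<lambda>x. \<Sum>i\<in>F. f i x) A = (\<Sum>i\<in>F. infsum (f i) A)" by auto
  have fj: "f j summable_on A" using insert by auto
  show ?case using insert(1,2) IH fj
    by (simp add: summable_on_add infsum_add)
qed

lemma eigen_identity:
  fixes g :: "real^'d \<Rightarrow> complex" and h :: "nat \<Rightarrow> real^'d \<Rightarrow> complex"
  assumes g: "in_L2 g" and fin: "finite (Om \<inter> L)"
    and ed: "eigendecomp (gabor_mult g Om L) lam h"
  shows "(\<Sum>l\<in>Om \<inter> L. (cmod (STFT g (h j) l))\<^sup>2) = lam j"
proof -
  have onb: "L2_onb h" using ed by (simp add: eigendecomp_def)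
  have hL: "\<And>k. in_L2 (h k)" and orth: "\<And>j k. L2_inner (h j) (h k) = (if j = k then 1 else 0)"
    using onb by (auto simp: L2_onb_def)
  define G where "G = gabor_mult g Om L (h j)"
  define V where "V l = STFT g (h j) l" for l
  have Geq: "G = (\<lambda>t. \<Sum>l\<in>Om \<inter> L. V l * tf_shift l g t)"
    unfolding G_def V_def gabor_mult_def by simp
  have GL: "in_L2 G" unfolding Geq by (intro L2_sum L2_scale shift_L2 g)
  define D where "D t = G t - complex_of_real (lam j) * h j t" for t
  have DL: "in_L2 D" unfolding D_def by (intro L2_diff GL L2_scale hL)
  have conv: "(\<lambda>n. L2_norm (\<lambda>t. G t - (\<Sum>k<n. complex_of_real (lam k) * L2_inner (h j) (h k) * h k t))) \<longlonglongrightarrow> 0"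
    using ed hL unfolding eigendecomp_def G_def by blast
  have const: "(\<lambda>t. G t - (\<Sum>k<n + Suc j. complex_of_real (lam k) * L2_inner (h j) (h k) * h k t)) = D" for n
  proof
    fix t
    have "(\<Sum>k<n + Suc j. complex_of_real (lam k) * L2_inner (h j) (h k) * h k t)
        = (\<Sum>k<n + Suc j. if j = k then complex_of_real (lam k) * h k t else 0)"
      by (intro sum.cong) (auto simp: orth)
    also have "\<dots> = complex_of_real (lam j) * h j t" by simp
    finally show "G t - (\<Sum>k<n + Suc j. complex_of_real (lam k) * L2_inner (h j) (h k) * h k t) = D t"
      by (simp add: D_def)
  qed
  have "(\<lambda>n. L2_norm D) \<longlonglongrightarrow> 0"
    using LIMSEQ_ignore_initial_segment[OF conv, of "Suc j"] by (simp only: const)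
  then have D0: "L2_norm D = 0" by (simp add: LIMSEQ_const_iff)
  have "(\<Sum>k<Suc j. (cmod (L2_inner D (h k)))\<^sup>2) \<le> 0"
    using bessel[OF DL hL orth, of "Suc j"] D0 by simp
  moreover have "(cmod (L2_inner D (h j)))\<^sup>2 \<le> (\<Sum>k<Suc j. (cmod (L2_inner D (h k)))\<^sup>2)"
    by (rule member_le_sum) auto
  ultimately have "L2_inner D (h j) = 0" by (smt (verit) zero_less_power2 norm_eq_zero)
  moreover have "L2_inner D (h j) = L2_inner G (h j) - complex_of_real (lam j)"
    unfolding D_def by (simp add: inner_diff_left GL L2_scale hL inner_scale_left orth)
  moreover have "L2_inner G (h j) = (\<Sum>l\<in>Om \<inter> L. complex_of_real ((cmod (V l))\<^sup>2))"
  proof -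
    have "L2_inner G (h j) = (\<Sum>l\<in>Om \<inter> L. L2_inner (\<lambda>t. V l * tf_shift l g t) (h j))"
      unfolding Geq by (rule inner_sum_left) (auto intro: L2_scale shift_L2 g hL)
    also have "\<dots> = (\<Sum>l\<in>Om \<inter> L. V l * cnj (V l))"
      by (simp only: inner_scale_left V_def STFT_def inner_cnj[of "tf_shift _ g"])
    also have "\<dots> = (\<Sum>l\<in>Om \<inter> L. complex_of_real ((cmod (V l))\<^sup>2))"
      by (simp only: complex_norm_square)
    finally show ?thesis .
  qed
  ultimately have "complex_of_real (\<Sum>l\<in>Om \<inter> L. (cmod (V l))\<^sup>2) = complex_of_real (lam j)"
    by simp
  then show ?thesis unfolding V_def using of_real_eq_iff by blast
qed

theorem lemma3p1:
  fixes g :: "real^'d \<Rightarrow> complex"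
    and L :: "((real^'d) \<times> (real^'d)) set"
    and Om :: "((real^'d) \<times> (real^'d)) set"
    and A B :: real
    and lam :: "nat \<Rightarrow> real"
    and h :: "nat \<Rightarrow> real^'d \<Rightarrow> complex"
  assumes "is_lattice L"
    and "in_L2 g"
    and "gabor_frame g L A B"
    and "compact Om"
    and "eigendecomp (gabor_mult g Om L) lam h"
  shows "(\<lambda>l. \<bar>acc_spec g h (A_Om g Om L B) l - indicator Om l\<bar>) summable_on L \<and>
    (\<Sum>\<^sub>\<infinity>l\<in>L. \<bar>acc_spec g h (A_Om g Om L B) l - indicator Om l\<bar>)
      \<le> 2 / (L2_norm g)\<^sup>2 * (real (card (Om \<inter> L)) * (L2_norm g)\<^sup>2 - (\<Sum>k<A_Om g Om L B. lam k))
        + B / (L2_norm g)\<^sup>2"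
proof -
  note g = assms(2)
  define F where "F = Om \<inter> L"
  have finF: "finite F" unfolding F_def by (rule lattice_finite[OF assms(1,4)])
  define N where "N = A_Om g Om L B"
  define c where "c = (L2_norm g)\<^sup>2"
  define V where "V k l = (cmod (STFT g (h k) l))\<^sup>2" for k l
  define rho where "rho l = acc_spec g h N l" for l
  define S where "S = (\<Sum>k<N. lam k)"
  have rho_def': "rho l = (1 / c) * (\<Sum>k<N. V k l)" for l
    unfolding rho_def acc_spec_def c_def V_def by simp
  have onb: "L2_onb h" using assms(5) by (simp add: eigendecomp_def)
  have hL: "\<And>k. in_L2 (h k)" and orth: "\<And>j k. L2_inner (h j) (h k) = (if j = k then 1 else 0)"
    using onb by (auto simp: L2_onb_def)
  have AB: "A > 0" "B > 0" using assms(3) by (auto simp: gabor_frame_def)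
  have frame: "\<And>f. in_L2 f \<Longrightarrow> (\<lambda>l. (cmod (STFT g f l))\<^sup>2) summable_on L \<and>
        A * (L2_norm f)\<^sup>2 \<le> (\<Sum>\<^sub>\<infinity>l\<in>L. (cmod (STFT g f l))\<^sup>2) \<and>
        (\<Sum>\<^sub>\<infinity>l\<in>L. (cmod (STFT g f l))\<^sup>2) \<le> B * (L2_norm f)\<^sup>2"
    using assms(3) by (auto simp: gabor_frame_def)
  have nh: "(L2_norm (h k))\<^sup>2 = 1" for k
  proof -
    have "complex_of_real ((L2_norm (h k))\<^sup>2) = complex_of_real 1"
      using inner_self[of "h k"] orth[of k k] by simp
    then show ?thesis using of_real_eq_iff by blast
  qed
  have Vsum: "V k summable_on L" and Vinf: "infsum (V k) L \<le> B" for k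
    using frame[OF hL[of k]] nh[of k] unfolding V_def by auto
  have Vnn: "V k l \<ge> 0" for k l unfolding V_def by simp
  have bes: "(\<Sum>k<n. V k l) \<le> c" for n l
  proof -
    have "(\<Sum>k<n. V k l) = (\<Sum>k<n. (cmod (L2_inner (tf_shift l g) (h k)))\<^sup>2)"
      unfolding V_def STFT_def by (simp add: inner_cnj[of "h _"])
    also have "\<dots> \<le> (L2_norm (tf_shift l g))\<^sup>2"
      by (rule bessel[OF shift_L2(1)[OF g] hL orth])
    finally show ?thesis using shift_L2(2)[OF g] c_def by simp
  qed
  have cpos: "c > 0"
  proof (rule ccontr)
    assume "\<not> c > 0"
    then have c0: "c \<le> 0" by simp
    have "V 0 l = 0" for l using bes[where n=1 and l=l] c0 Vnn[of 0 l] by simp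
    then have "V 0 = (\<lambda>_. 0)" by auto
    then have "infsum (V 0) L = 0" by simp
    then show False using frame[OF hL[of 0]] nh[of 0] AB(1) unfolding V_def by simp
  qed
  have rho_nn: "rho l \<ge> 0" for l
    unfolding rho_def' using cpos Vnn by (simp add: sum_nonneg)
  have rho_le1: "rho l \<le> 1" for l
    unfolding rho_def' using cpos bes[where n=N and l=l] by simp
  have sumV: "(\<lambda>l. \<Sum>k<N. V k l) summable_on L \<and> infsum (\<lambda>l. \<Sum>k<N. V k l) L = (\<Sum>k<N. infsum (V k) L)"
    by (rule infsum_fsum) (auto intro: Vsum)
  have rho_sum: "rho summable_on L"
    unfolding rho_def' using sumV by (intro summable_on_cmult_right) auto
  have rho_inf: "infsum rho L = (1/c) * (\<Sum>k<N. infsum (V k) L)"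
    unfolding rho_def' using sumV by (subst infsum_cmult_right) auto
  have rho_inf_le: "infsum rho L \<le> (1/c) * (real N * B)"
  proof -
    have "(\<Sum>k<N. infsum (V k) L) \<le> (\<Sum>k<N. B)" by (intro sum_mono Vinf)
    then show ?thesis unfolding rho_inf using cpos by (simp add: divide_right_mono)
  qed
  define chi where "chi l = (indicator Om l :: real)" for l
  have chi_F: "\<And>l. l \<in> L \<Longrightarrow> chi l = (if l \<in> F then 1 else 0)"
    unfolding chi_def F_def by (simp add: indicator_def)
  have FL: "F \<subseteq> L" unfolding F_def by auto
  have chi_sum: "chi summable_on L"
    by (subst summable_on_cong_neutral[where T=F and g=chi]) (use finF FL in \<open>auto simp: chi_F\<close>)
  have chi_inf: "infsum chi L = real (card F)"
  proof -
    have "infsum chi L = infsum chi F"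
      by (rule infsum_cong_neutral) (auto simp: chi_F F_def)
    also have "\<dots> = (\<Sum>l\<in>F. 1)" using finF by (simp add: chi_F F_def)
    finally show ?thesis by simp
  qed
  have rc_sum: "(\<lambda>l. rho l * chi l) summable_on L"
    by (subst summable_on_cong_neutral[where T=F and g="\<lambda>l. rho l * chi l"]) (use finF FL in \<open>auto simp: chi_F\<close>)
  have rc_inf: "infsum (\<lambda>l. rho l * chi l) L = S / c"
  proof -
    have "infsum (\<lambda>l. rho l * chi l) L = infsum (\<lambda>l. rho l * chi l) F"
      by (rule infsum_cong_neutral) (auto simp: chi_F F_def)
    also have "\<dots> = (\<Sum>l\<in>F. rho l)" using finF by (simp add: chi_F F_def)
    also have "\<dots> = (1/c) * (\<Sum>k<N. \<Sum>l\<in>F. V k l)"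
      unfolding rho_def' by (simp add: sum_distrib_left sum.swap[of _ F])
    also have "\<dots> = (1/c) * S"
      unfolding S_def V_def F_def
      using eigen_identity[OF g lattice_finite[OF assms(1,4)] assms(5)] by simp
    finally show ?thesis by simp
  qed
  have pw: "\<bar>rho l - chi l\<bar> = rho l + chi l + (-2) * (rho l * chi l)" for l
    using rho_nn[of l] rho_le1[of l] unfolding chi_def by (auto simp: indicator_def)
  have comb_sum: "(\<lambda>l. rho l + chi l + (-2) * (rho l * chi l)) summable_on L"
    by (intro summable_on_add summable_on_cmult_right rho_sum chi_sum rc_sum)
  have comb_inf: "infsum (\<lambda>l. rho l + chi l + (-2) * (rho l * chi l)) L = infsum rho L + real (card F) - 2 * (S / c)"
  proof -
    have "infsum (\<lambda>l. rho l + chi l + (-2) * (rho l * chi l)) L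
        = infsum (\<lambda>l. rho l + chi l) L + infsum (\<lambda>l. (-2) * (rho l * chi l)) L"
      by (rule infsum_add) (intro summable_on_add summable_on_cmult_right rho_sum chi_sum rc_sum)+
    also have "infsum (\<lambda>l. rho l + chi l) L = infsum rho L + infsum chi L"
      by (rule infsum_add[OF rho_sum chi_sum])
    also have "infsum (\<lambda>l. (-2) * (rho l * chi l)) L = (-2) * infsum (\<lambda>l. rho l * chi l) L"
      by (rule infsum_cmult_right) (rule rc_sum)
    finally show ?thesis by (simp add: chi_inf rc_inf)
  qed
  have Nb: "real N * B \<le> real (card F) * c + B"
  proof -
    have x0: "real (card F) * c / B \<ge> 0" using cpos AB by simp
    have "real N = of_int \<lceil>real (card F) * c / B\<rceil>"
      unfolding N_def A_Om_def F_def c_def using x0 unfolding F_def c_def by simp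
    also have "\<dots> \<le> real (card F) * c / B + 1" by linarith
    finally have "real N * B \<le> (real (card F) * c / B + 1) * B" using AB by (simp add: mult_right_mono)
    moreover have "(real (card F) * c / B + 1) * B = real (card F) * c + B" using AB by (simp add: field_simps)
    ultimately show ?thesis by simp
  qed
  have main: "infsum (\<lambda>l. \<bar>rho l - chi l\<bar>) L \<le> 2 / c * (real (card F) * c - S) + B / c"
  proof -
    have "infsum (\<lambda>l. \<bar>rho l - chi l\<bar>) L = infsum rho L + real (card F) - 2 * (S / c)"
      using comb_inf pw by simp
    also have "\<dots> \<le> (1/c) * (real (card F) * c + B) + real (card F) - 2 * (S / c)"
      using rho_inf_le Nb cpos by (smt (verit) divide_pos_pos mult_left_mono)
    also have "\<dots> = 2 / c * (real (card F) * c - S) + B / c"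
      using cpos by (simp add: field_simps)
    finally show ?thesis .
  qed
  have summ: "(\<lambda>l. \<bar>rho l - chi l\<bar>) summable_on L" using comb_sum pw by simp
  show ?thesis
    using summ main unfolding rho_def chi_def N_def c_def S_def F_def by simp
qed

end
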